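(* Let $m=2^p$ and let $r_1,\dots,r_m\in\{1,\dots,m\}$ (repetitions allowed). Let $A$ be the $m\times m$ matrix whose $i$-th row is the $r_i$-th row of $H(m)$. If $b(r_1-1)\oplus b(r_2-1)\oplus\dots\oplus b(r_m-1)\neq 0$, then $\mathrm{perm}\,A=0$.
   Context: For $m=2^p$, the Sylvester matrix $H(m)$ is defined recursively by $H(1)=[1]$ and $H(2^p)=\begin{bmatrix}H(2^{p-1})&H(2^{p-1})\\ H(2^{p-1})&-H(2^{p-1})\end{bmatrix}$, rows and columns indexed $1,\dots,m$; equivalently $[H(m)]_{i,j}=(-1)^{b(i-1)\odot b(j-1)}$. Here $b(x)$ denotes the $p$-bit binary representation of $x\in\{0,\dots,m-1\}$, $\odot$ is the bitwise dot product, and $\oplus$ is bitwise XOR. $\mathrm{perm}\,A=\sum_{\sigma\in S_m}\prod_{i=1}^m a_{i,\sigma(i)}$. *)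

theory Defs
  imports Main "HOL-Combinatorics.Permutations"
begin

text \<open>Sylvester matrix H(2^p), entries indexed 1..2^p (1-based), defined recursively:
  H(1) = [1], H(2^(p+1)) = [[H, H], [H, -H]].\<close>
fun sylvester :: "nat \<Rightarrow> nat \<Rightarrow> nat \<Rightarrow> int" where
  "sylvester 0 i j = 1"
| "sylvester (Suc p) i j =
     (let h = 2 ^ p in
      if i \<le> h \<and> j \<le> h then sylvester p i j
      else if i \<le> h then sylvester p i (j - h)
      else if j \<le> h then sylvester p (i - h) j
      else - sylvester p (i - h) (j - h))"

definition permanent :: "nat \<Rightarrow> (nat \<Rightarrow> nat \<Rightarrow> int) \<Rightarrow> int" where
  "permanent m A = (\<Sum>\<sigma> | \<sigma> permutes {1..m}. \<Prod>i=1..m. A i (\<sigma> i))"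

definition xor_all :: "nat list \<Rightarrow> nat" where
  "xor_all xs = foldr xor xs 0"

end

theory Submission
  imports Defs
begin
unbundle bit_operations_syntax

definition sg :: "nat \<Rightarrow> nat \<Rightarrow> nat \<Rightarrow> int" where
  "sg p x y = (-1) ^ card {k. k < p \<and> bit x k \<and> bit y k}"

lemma bit_low: "(x::nat) < 2^p \<Longrightarrow> \<not> bit x p"
  by (simp add: bit_iff_odd)

lemma bit_high_all: "(y::nat) < 2^p \<Longrightarrow> bit (y + 2^p) k = (bit y k \<or> k = p)"
proof -
  assume a: "y < 2^p"
  have "y AND 2^p = 0" using bit_low[OF a] and_exp_eq_0_iff_not_bit by blast
  then have "y + 2^p = y OR 2^p" by (rule disjunctive_add_eq_or)
  then show ?thesis by (auto simp: bit_simps)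
qed

lemma bit_high: "(y::nat) < 2^p \<Longrightarrow> k < p \<Longrightarrow> bit (y + 2^p) k = bit y k"
  using bit_high_all by auto

lemma bit_high2: "(y::nat) < 2^p \<Longrightarrow> bit (y + 2^p) p"
  using bit_high_all by auto

lemma card_split: "card {k. k < Suc p \<and> P k} = card {k. k < p \<and> P k} + (if P p then 1 else 0)"
proof -
  have "{k. k < Suc p \<and> P k} = {k. k < p \<and> P k} \<union> (if P p then {p} else {})"
    by (auto simp: less_Suc_eq)
  then show ?thesis by auto
qed

lemma cong_set: "(\<And>k. k < p \<Longrightarrow> bit x k = bit x' k) \<Longrightarrow> (\<And>k. k < p \<Longrightarrow> bit y k = bit y' k) \<Longrightarrow>
   {k. k < p \<and> bit x k \<and> bit y k} = {k. k < p \<and> bit x' k \<and> bit y' k}"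
  by auto

lemma sg_shift:
  assumes x: "x < 2^p" and y: "y < 2^p"
  shows "sg (Suc p) x y = sg p x y"
    "sg (Suc p) (x+2^p) y = sg p x y"
    "sg (Suc p) x (y+2^p) = sg p x y"
    "sg (Suc p) (x+2^p) (y+2^p) = - sg p x y"
proof -
  have bx: "\<And>k. k < p \<Longrightarrow> bit (x+2^p) k = bit x k" using bit_high[OF x] by auto
  have by': "\<And>k. k < p \<Longrightarrow> bit (y+2^p) k = bit y k" using bit_high[OF y] by auto
  show "sg (Suc p) x y = sg p x y"
    unfolding sg_def card_split using bit_low[OF x] by simp
  show "sg (Suc p) (x+2^p) y = sg p x y"
    unfolding sg_def card_split using bit_low[OF y] cong_set[of p "x+2^p" x y y, OF bx] by simp
  show "sg (Suc p) x (y+2^p) = sg p x y"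
    unfolding sg_def card_split using bit_low[OF x] cong_set[of p x x "y+2^p" y, OF _ by'] by simp
  show "sg (Suc p) (x+2^p) (y+2^p) = - sg p x y"
    unfolding sg_def card_split using bit_high2[OF x] bit_high2[OF y] cong_set[of p "x+2^p" x "y+2^p" y, OF bx by'] by simp
qed

lemma syl_closed: "1 \<le> i \<Longrightarrow> i \<le> 2^p \<Longrightarrow> 1 \<le> j \<Longrightarrow> j \<le> 2^p \<Longrightarrow> sylvester p i j = sg p (i-1) (j-1)"
proof (induction p arbitrary: i j)
  case 0 then show ?case by (simp add: sg_def)
next
  case (Suc p)
  define h :: nat where "h = 2^p"
  have split: "\<exists>x. x < h \<and> ((a \<le> h \<and> a = Suc x) \<or> (\<not> a \<le> h \<and> a = Suc x + h))"
    if "1 \<le> a" "a \<le> 2^Suc p" for a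
  proof (cases "a \<le> h")
    case True then show ?thesis using that by (intro exI[of _ "a - 1"]) auto
  next
    case False then show ?thesis using that h_def by (intro exI[of _ "a - h - 1"]) auto
  qed
  obtain x where x: "x < h" "(i \<le> h \<and> i = Suc x) \<or> (\<not> i \<le> h \<and> i = Suc x + h)"
    using split[OF Suc.prems(1,2)] by blast
  obtain y where y: "y < h" "(j \<le> h \<and> j = Suc y) \<or> (\<not> j \<le> h \<and> j = Suc y + h)"
    using split[OF Suc.prems(3,4)] by blast
  have IH: "sylvester p (Suc x) (Suc y) = sg p x y"
    using Suc.IH[of "Suc x" "Suc y"] x y h_def by simp
  note sh = sg_shift[of x p y, folded h_def, OF x(1) y(1)]
  from x(2) y(2) show ?case
  proof (elim disjE conjE)
    assume "i \<le> h" "i = Suc x" "j \<le> h" "j = Suc y"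
    then show ?thesis using IH sh by (simp add: Let_def h_def[symmetric])
  next
    assume "i \<le> h" "i = Suc x" "\<not> j \<le> h" "j = Suc y + h"
    then show ?thesis using IH sh by (simp add: Let_def h_def[symmetric])
  next
    assume "\<not> i \<le> h" "i = Suc x + h" "j \<le> h" "j = Suc y"
    then show ?thesis using IH sh by (simp add: Let_def h_def[symmetric])
  next
    assume "\<not> i \<le> h" "i = Suc x + h" "\<not> j \<le> h" "j = Suc y + h"
    then show ?thesis using IH sh by (simp add: Let_def h_def[symmetric])
  qed
qed

lemma sg_flip:
  assumes "k < p"
  shows "sg p x (y XOR 2^k) = (if bit x k then -1 else 1) * sg p x y"
proof -
  let ?S = "{l. l < p \<and> bit x l \<and> bit y l}"
  let ?T = "{l. l < p \<and> bit x l \<and> bit (y XOR 2^k) l}"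
  have b: "\<And>l. bit (y XOR 2^k) l = (bit y l \<noteq> (l = k))" by (auto simp: bit_simps)
  show ?thesis
  proof (cases "bit x k")
    case False
    then have "?T = ?S" using b by auto
    then show ?thesis using False by (simp add: sg_def)
  next
    case True
    show ?thesis
    proof (cases "bit y k")
      case yk: True
      have "?S = insert k ?T" "k \<notin> ?T" using b True yk assms by auto
      then have "card ?S = Suc (card ?T)" by simp
      then show ?thesis using True by (simp add: sg_def)
    next
      case yk: False
      have "?T = insert k ?S" "k \<notin> ?S" using b True yk assms by auto
      then have "card ?T = Suc (card ?S)" by simp
      then show ?thesis using True by (simp add: sg_def)
    qed
  qed
qed

lemma xor_lt: "(y::nat) < 2^p \<Longrightarrow> k < p \<Longrightarrow> y XOR 2^k < 2^p"
  by (simp flip: take_bit_nat_eq_self_iff add: take_bit_xor)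

lemma bit_xor_all: "bit (xor_all xs) k \<longleftrightarrow> odd (length (filter (\<lambda>x. bit x k) xs))"
  by (induction xs) (auto simp: xor_all_def bit_simps)

lemma bit_big: "(x::nat) < 2^p \<Longrightarrow> p \<le> k \<Longrightarrow> \<not> bit x k"
  by (metis bit_take_bit_iff leD take_bit_nat_eq_self_iff)

lemma prod_sign: "finite A \<Longrightarrow> (\<Prod>i\<in>A. (if P i then -1 else 1 :: int)) = (-1) ^ card {i\<in>A. P i}"
proof -
  assume f: "finite A"
  have "(\<Prod>i\<in>A. (if P i then -1 else 1 :: int)) = (\<Prod>i\<in>A \<inter> {i. P i}. -1) * (\<Prod>i\<in>A - {i. P i}. 1)"
    using prod.If_cases[OF f, of P "\<lambda>_. -1" "\<lambda>_. 1"] by simp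
  also have "A \<inter> {i. P i} = {i\<in>A. P i}" by auto
  finally show ?thesis by simp
qed

theorem proposition5:
  fixes p :: nat and r :: "nat \<Rightarrow> nat"
  assumes "\<forall>i\<in>{1..2^p}. r i \<in> {1..2^p}"
    and "xor_all (map (\<lambda>i. r i - 1) [1..<2^p + 1]) \<noteq> 0"
  shows "permanent (2^p) (\<lambda>i j. sylvester p (r i) j) = 0"
proof -
  define m :: nat where "m = 2^p"
  define S where "S = {1..m}"
  define s where "s = xor_all (map (\<lambda>i. r i - 1) [1..<2^p + 1])"
  have "\<exists>k. bit s k"
  proof (rule ccontr)
    assume "\<not> (\<exists>k. bit s k)"
    then have "s = 0" by (intro bit_eqI) auto
    then show False using assms(2) s_def by simp
  qed
  then obtain k where bk: "bit s k" by blast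
  have rS: "\<And>i. i \<in> S \<Longrightarrow> r i \<in> S" using assms(1) unfolding S_def m_def by auto
  have odd: "odd (length (filter (\<lambda>x. bit x k) (map (\<lambda>i. r i - 1) [1..<2^p + 1])))"
    using bk bit_xor_all s_def by simp
  have kp: "k < p"
  proof (rule ccontr)
    assume "\<not> k < p"
    then have "\<And>i. i \<in> S \<Longrightarrow> \<not> bit (r i - 1) k"
    proof -
      fix i assume "i \<in> S"
      then have "r i - 1 < 2^p" using rS unfolding S_def m_def by fastforce
      then show "\<not> bit (r i - 1) k" using bit_big[of _ p k] \<open>\<not> k < p\<close> by simp
    qed
    then have "filter (\<lambda>x. bit x k) (map (\<lambda>i. r i - 1) [1..<2^p + 1]) = []"
      unfolding S_def m_def by (auto simp: filter_empty_conv)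
    then show False using odd by simp
  qed
  have cnt: "length (filter (\<lambda>x. bit x k) (map (\<lambda>i. r i - 1) [1..<2^p + 1])) = card {i\<in>S. bit (r i - 1) k}"
  proof -
    have "length (filter (\<lambda>x. bit x k) (map (\<lambda>i. r i - 1) [1..<2^p + 1]))
        = card ({i. bit (r i - 1) k} \<inter> set [1..<2^p + 1])"
      by (simp add: distinct_length_filter o_def)
    also have "{i. bit (r i - 1) k} \<inter> set [1..<2^p + 1] = {i\<in>S. bit (r i - 1) k}"
      unfolding S_def m_def by auto
    finally show ?thesis .
  qed
  define eps where "eps i = (if bit (r i - 1) k then -1 else 1 :: int)" for i
  have prodeps: "(\<Prod>i\<in>S. eps i) = -1"
    using prod_sign[of S "\<lambda>i. bit (r i - 1) k"] cnt odd unfolding eps_def S_def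
    by (simp add: S_def)
  define tau where "tau j = (if j \<in> S then ((j - 1) XOR 2^k) + 1 else j)" for j
  have tauS: "tau j \<in> S" if "j \<in> S" for j
  proof -
    have "j - 1 < 2^p" using that unfolding S_def m_def by auto
    then have "(j - 1) XOR 2^k < 2^p" using xor_lt kp by blast
    then show ?thesis using that unfolding tau_def S_def m_def by auto
  qed
  have tautau: "tau (tau j) = j" for j
  proof (cases "j \<in> S")
    case True
    then have "tau (tau j) = (((j - 1) XOR 2^k) XOR 2^k) + 1"
      using tauS[OF True] unfolding tau_def by (simp add: True)
    also have "((j - 1) XOR 2^k) XOR 2^k = j - 1" by (rule bit_eqI) (auto simp: bit_simps)
    also have "j - 1 + 1 = j" using True unfolding S_def by simp
    finally show ?thesis .
  next
    case False then show ?thesis by (simp add: tau_def)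
  qed
  have tperm: "tau permutes S"
  proof (rule bij_imp_permutes)
    show "bij_betw tau S S"
      by (rule bij_betw_byWitness[where f' = tau]) (use tautau tauS in auto)
    show "\<And>x. x \<notin> S \<Longrightarrow> tau x = x" by (simp add: tau_def)
  qed
  define A where "A i j = sylvester p (r i) j" for i j
  have Aflip: "A i (tau j) = eps i * A i j" if "i \<in> S" "j \<in> S" for i j
  proof -
    have ri: "1 \<le> r i" "r i \<le> 2^p" using rS[OF that(1)] unfolding S_def m_def by auto
    have j: "1 \<le> j" "j \<le> 2^p" using that(2) unfolding S_def m_def by auto
    have tj: "1 \<le> tau j" "tau j \<le> 2^p" using tauS[OF that(2)] unfolding S_def m_def by auto
    have "A i (tau j) = sg p (r i - 1) (tau j - 1)" using syl_closed ri tj A_def by simp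
    also have "tau j - 1 = (j - 1) XOR 2^k" using that(2) by (simp add: tau_def)
    also have "sg p (r i - 1) ((j - 1) XOR 2^k) = eps i * sg p (r i - 1) (j - 1)"
      using sg_flip[OF kp] eps_def by simp
    also have "sg p (r i - 1) (j - 1) = A i j" using syl_closed ri j A_def by simp
    finally show ?thesis .
  qed
  define P where "P = permanent m A"
  have "P = (\<Sum>\<sigma> | \<sigma> permutes S. \<Prod>i\<in>S. A i (\<sigma> i))"
    unfolding P_def permanent_def S_def ..
  also have "\<dots> = (\<Sum>\<sigma> | \<sigma> permutes S. \<Prod>i\<in>S. A i ((tau \<circ> \<sigma>) i))"
    by (rule setum_permutations_compose_left[OF tperm])
  also have "\<dots> = (\<Sum>\<sigma> | \<sigma> permutes S. - (\<Prod>i\<in>S. A i (\<sigma> i)))"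
  proof (rule sum.cong[OF refl])
    fix \<sigma> assume "\<sigma> \<in> {\<sigma>. \<sigma> permutes S}"
    then have sp: "\<sigma> permutes S" by simp
    have "(\<Prod>i\<in>S. A i ((tau \<circ> \<sigma>) i)) = (\<Prod>i\<in>S. eps i * A i (\<sigma> i))"
      by (rule prod.cong[OF refl]) (simp add: Aflip permutes_in_image[OF sp])
    also have "\<dots> = (\<Prod>i\<in>S. eps i) * (\<Prod>i\<in>S. A i (\<sigma> i))" by (rule prod.distrib)
    finally show "(\<Prod>i\<in>S. A i ((tau \<circ> \<sigma>) i)) = - (\<Prod>i\<in>S. A i (\<sigma> i))" using prodeps by simp
  qed
  also have "\<dots> = - P"
    unfolding P_def permanent_def S_def by (simp add: sum_negf)
  finally have "P = 0" by simp
  then show ?thesis unfolding P_def A_def m_def .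
qed

end
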